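(* Let $n \ge 1$ and let $N$ be a $\lambda$-term satisfying $N a_1 a_2 \ldots a_n =_\beta a_1 a_2 \ldots a_n (N a_1 a_2 \ldots a_n)$ (for variables $a_1,\ldots,a_n$ not free in $N$). Then $N\,I^{\,n-1}$ (i.e. $N$ applied to $n-1$ copies of $I$) is a fixed point combinator.
   Context: Untyped $\lambda$-calculus; $=_\beta$ is $\beta$-convertibility; $I = \lambda x.x$. A term $Y$ is a fixed point combinator if $Yx =_\beta x(Yx)$ for a variable $x$ not free in $Y$. $N\,I^{m}$ denotes the left-associated application $N I \cdots I$ with $m$ copies of $I$. *)

theory Defs
  imports Main
begin

text \<open>Untyped lambda terms in de Bruijn notation. Free variables are the loose
  indices; a free variable x is represented by the loose index x.\<close>

datatype lterm = Var nat | App lterm lterm | Abs lterm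

primrec lift :: "lterm \<Rightarrow> nat \<Rightarrow> lterm" where
  "lift (Var i) k = (if i < k then Var i else Var (i + 1))"
| "lift (App s t) k = App (lift s k) (lift t k)"
| "lift (Abs s) k = Abs (lift s (k + 1))"

primrec subst :: "lterm \<Rightarrow> nat \<Rightarrow> lterm \<Rightarrow> lterm" where
  "subst (Var i) k s = (if k < i then Var (i - 1) else if i = k then s else Var i)"
| "subst (App t u) k s = App (subst t k s) (subst u k s)"
| "subst (Abs t) k s = Abs (subst t (k + 1) (lift s 0))"

inductive beta :: "lterm \<Rightarrow> lterm \<Rightarrow> bool" where
  beta_redex: "beta (App (Abs s) t) (subst s 0 t)"
| beta_appL: "beta s t \<Longrightarrow> beta (App s u) (App t u)"
| beta_appR: "beta s t \<Longrightarrow> beta (App u s) (App u t)"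
| beta_abs: "beta s t \<Longrightarrow> beta (Abs s) (Abs t)"

definition beta_eq :: "lterm \<Rightarrow> lterm \<Rightarrow> bool" (infix "=\<^sub>\<beta>" 50) where
  "s =\<^sub>\<beta> t \<longleftrightarrow> equivclp beta s t"

primrec fv_at :: "nat \<Rightarrow> lterm \<Rightarrow> nat set" where
  "fv_at k (Var i) = (if i < k then {} else {i - k})"
| "fv_at k (App s t) = fv_at k s \<union> fv_at k t"
| "fv_at k (Abs s) = fv_at (k + 1) s"

definition fv :: "lterm \<Rightarrow> nat set" where
  "fv t = fv_at 0 t"

definition apps :: "lterm \<Rightarrow> lterm list \<Rightarrow> lterm" where
  "apps t us = foldl App t us"

definition I_comb :: lterm where
  "I_comb = Abs (Var 0)"

definition is_fpc :: "lterm \<Rightarrow> bool" where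
  "is_fpc Y \<longleftrightarrow> (\<forall>x. x \<notin> fv Y \<longrightarrow>
       App Y (Var x) =\<^sub>\<beta> App (Var x) (App Y (Var x)))"

end

theory Submission
  imports Defs
begin

lemma lift_lift: "i < k + 1 \<Longrightarrow> lift (lift t i) (Suc k) = lift (lift t k) i"
  by (induct t arbitrary: i k) auto

lemma lift_subst [simp]: "j < i + 1 \<Longrightarrow> lift (subst t j s) i = subst (lift t (i + 1)) j (lift s i)"
  by (induct t arbitrary: i j s) (simp_all add: diff_Suc lift_lift split: nat.split)

lemma lift_subst_lt: "i < j + 1 \<Longrightarrow> lift (subst t j s) i = subst (lift t i) (j + 1) (lift s i)"
  by (induct t arbitrary: i j s) (auto simp add: lift_lift)

lemma subst_lift [simp]: "subst (lift t k) k s = t"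
  by (induct t arbitrary: k s) simp_all

lemma subst_subst: "i < j + 1 \<Longrightarrow> subst (subst t (Suc j) (lift v i)) i (subst u j v) = subst (subst t i u) j v"
  by (induct t arbitrary: i j u v) (simp_all add: diff_Suc lift_lift [symmetric] lift_subst_lt split: nat.split)

lemma lift_preserves_beta: "beta r s \<Longrightarrow> beta (lift r i) (lift s i)"
proof (induct arbitrary: i rule: beta.induct)
  case (beta_redex s t)
  have "lift (subst s 0 t) i = subst (lift s (i+1)) 0 (lift t i)" by simp
  then show ?case using beta.beta_redex[of "lift s (i+1)" "lift t i"] by simp
qed (auto intro: beta.intros)

lemma subst_preserves_beta: "beta r s \<Longrightarrow> beta (subst r i t) (subst s i t)"
proof (induct arbitrary: t i rule: beta.induct)
  case (beta_redex s u)
  have "subst (subst s 0 u) i t = subst (subst s (Suc i) (lift t 0)) 0 (subst u i t)"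
    using subst_subst[of 0 i s t u] by simp
  then show ?case using beta.beta_redex[of "subst s (Suc i) (lift t 0)" "subst u i t"] by simp
qed (auto intro: beta.intros)

lemma equivclp_map: "(\<And>a b. r a b \<Longrightarrow> r (f a) (f b)) \<Longrightarrow> equivclp r s t \<Longrightarrow> equivclp r (f s) (f t)"
  unfolding equivclp_def
proof -
  assume h: "\<And>a b. r a b \<Longrightarrow> r (f a) (f b)" and st: "(symclp r)\<^sup>*\<^sup>* s t"
  from st show "(symclp r)\<^sup>*\<^sup>* (f s) (f t)"
  proof (induct rule: rtranclp_induct)
    case (step y z)
    then have "symclp r (f y) (f z)" using h by (auto simp: symclp_def)
    then show ?case using step by (meson rtranclp.rtrancl_into_rtrancl)
  qed simp
qed

definition rep :: "lterm \<Rightarrow> nat \<Rightarrow> lterm \<Rightarrow> lterm" where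
  "rep t a u = subst (lift t (a+1)) a u"

lemma rep_beta_eq: "s =\<^sub>\<beta> t \<Longrightarrow> rep s a u =\<^sub>\<beta> rep t a u"
  unfolding beta_eq_def rep_def
  by (rule equivclp_map[where f="\<lambda>x. subst (lift x (a+1)) a u"])
     (auto intro: subst_preserves_beta lift_preserves_beta)

lemma App_eq_L: "s =\<^sub>\<beta> t \<Longrightarrow> App s u =\<^sub>\<beta> App t u"
  unfolding beta_eq_def by (rule equivclp_map[where f="\<lambda>x. App x u"]) (auto intro: beta.intros)

lemma App_eq_R: "s =\<^sub>\<beta> t \<Longrightarrow> App u s =\<^sub>\<beta> App u t"
  unfolding beta_eq_def by (rule equivclp_map[where f="\<lambda>x. App u x"]) (auto intro: beta.intros)

lemma beta_eq_trans: "s =\<^sub>\<beta> t \<Longrightarrow> t =\<^sub>\<beta> u \<Longrightarrow> s =\<^sub>\<beta> u"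
  unfolding beta_eq_def by (rule equivclp_trans)

lemma beta_eq_sym: "s =\<^sub>\<beta> t \<Longrightarrow> t =\<^sub>\<beta> s"
  unfolding beta_eq_def by (rule equivclp_sym)

lemma beta_eq_step: "beta s t \<Longrightarrow> s =\<^sub>\<beta> t"
  unfolding beta_eq_def by (rule r_into_equivclp)

lemma rep_fix_gen: "a \<notin> fv_at k t \<Longrightarrow> subst (lift t (a+k+1)) (a+k) u = t"
proof (induct t arbitrary: k u)
  case (Abs t)
  then have "subst (lift t (a + Suc k + 1)) (a + Suc k) (lift u 0) = t"
    using Abs(1)[of "Suc k" "lift u 0"] by simp
  then show ?case by simp
qed auto

lemma rep_fix: "a \<notin> fv t \<Longrightarrow> rep t a u = t"
  using rep_fix_gen[of a 0 t u] by (simp add: fv_def rep_def)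

lemma rep_App: "rep (App s t) a u = App (rep s a u) (rep t a u)"
  by (simp add: rep_def)

lemma rep_Var_eq: "rep (Var a) a u = u" by (simp add: rep_def)
lemma rep_Var_ne: "b \<noteq> a \<Longrightarrow> rep (Var b) a u = Var b" by (simp add: rep_def)
lemma rep_I: "rep I_comb a u = I_comb" by (simp add: rep_def I_comb_def)

definition F :: "nat list \<Rightarrow> lterm \<Rightarrow> lterm" where
  "F bs t = foldl (\<lambda>t b. rep t b I_comb) t bs"

lemma F_App: "F bs (App s t) = App (F bs s) (F bs t)"
  unfolding F_def by (induct bs arbitrary: s t) (auto simp: rep_App)

lemma F_apps: "F bs (apps s ts) = apps (F bs s) (map (F bs) ts)"
  unfolding apps_def by (induct ts arbitrary: s rule: rev_induct) (auto simp: F_App)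

lemma rep_apps: "rep (apps s ts) a u = apps (rep s a u) (map (\<lambda>t. rep t a u) ts)"
  unfolding apps_def by (induct ts arbitrary: s rule: rev_induct) (auto simp: rep_App)

lemma F_I: "F bs I_comb = I_comb"
  unfolding F_def by (induct bs) (auto simp: rep_I)

lemma F_fix: "\<forall>b\<in>set bs. b \<notin> fv t \<Longrightarrow> F bs t = t"
  unfolding F_def by (induct bs) (auto simp: rep_fix)

lemma F_Var_notin: "c \<notin> set bs \<Longrightarrow> F bs (Var c) = Var c"
  unfolding F_def by (induct bs) (auto simp: rep_Var_ne)

lemma F_Var_in: "b \<in> set bs \<Longrightarrow> F bs (Var b) = I_comb"
proof (induct bs arbitrary: b)
  case (Cons b' bs)
  show ?case
  proof (cases "b' = b")
    case True then show ?thesis using F_I[of bs] by (simp add: F_def rep_Var_eq)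
  next
    case False then show ?thesis using Cons by (simp add: F_def rep_Var_ne)
  qed
qed simp

lemma F_beta_eq: "s =\<^sub>\<beta> t \<Longrightarrow> F bs s =\<^sub>\<beta> F bs t"
  unfolding F_def by (induct bs arbitrary: s t) (auto simp: rep_beta_eq)

lemma beta_eq_trans_calc[trans]: "s =\<^sub>\<beta> t \<Longrightarrow> t =\<^sub>\<beta> u \<Longrightarrow> s =\<^sub>\<beta> u"
  by (rule beta_eq_trans)

lemma II: "apps I_comb (replicate m I_comb) =\<^sub>\<beta> I_comb"
proof (induct m)
  case 0 then show ?case by (simp add: apps_def beta_eq_def)
next
  case (Suc m)
  have "apps I_comb (replicate (Suc m) I_comb) = App (apps I_comb (replicate m I_comb)) I_comb"
  proof -
    have "replicate (Suc m) I_comb = replicate m I_comb @ [I_comb]" by (simp add: replicate_append_same)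
    then show ?thesis by (simp add: apps_def del: replicate_Suc)
  qed
  also have "\<dots> =\<^sub>\<beta> App I_comb I_comb" using Suc by (rule App_eq_L)
  also have "App I_comb I_comb =\<^sub>\<beta> I_comb"
    by (rule beta_eq_step) (metis I_comb_def beta_redex subst.simps(1) less_irrefl)
  finally show ?case .
qed



lemma apps_snoc: "apps s (ts @ [t]) = App (apps s ts) t" by (simp add: apps_def)

lemma IVar: "App I_comb (Var x) =\<^sub>\<beta> Var x"
  by (rule beta_eq_step) (metis I_comb_def beta_redex subst.simps(1) less_irrefl)

theorem proposition5p1:
  fixes N :: lterm and n :: nat and as :: "nat list"
  assumes "n \<ge> 1"
    and "length as = n" and "distinct as" and "\<forall>a\<in>set as. a \<notin> fv N"
    and "apps N (map Var as) =\<^sub>\<beta> App (apps (Var (hd as)) (map Var (tl as))) (apps N (map Var as))"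
  shows "is_fpc (apps N (replicate (n - 1) I_comb))"
proof -
  obtain bs c where as: "as = bs @ [c]"
    using assms(1,2) by (metis One_nat_def le_0_eq length_0_conv neq0_conv not_one_le_zero rev_exhaust)
  have lb: "length bs = n - 1" using as assms(2) by simp
  have cnot: "c \<notin> set bs" using as assms(3) by simp
  let ?M = "apps N (replicate (n - 1) I_comb)"
  show ?thesis unfolding is_fpc_def
  proof (intro allI impI)
    fix x
    define R where "R t = rep (F bs t) c (Var x)" for t
    have Req: "s =\<^sub>\<beta> t \<Longrightarrow> R s =\<^sub>\<beta> R t" for s t
      unfolding R_def by (intro rep_beta_eq F_beta_eq)
    have Rapps: "R (apps s ts) = apps (R s) (map R ts)" for s ts
      unfolding R_def by (simp add: F_apps rep_apps comp_def)
    have RN: "R N = N" unfolding R_def using assms(4) as by (simp add: F_fix rep_fix)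
    have Rbs: "map (\<lambda>b. R (Var b)) bs' = replicate (length bs') I_comb" if "set bs' \<subseteq> set bs" for bs'
      using that by (induct bs') (auto simp: R_def F_Var_in rep_I)
    have Rc: "R (Var c) = Var x" unfolding R_def by (simp add: F_Var_notin cnot rep_Var_eq)
    have L: "R (apps N (map Var as)) = App ?M (Var x)"
    proof -
      have "R (apps N (map Var as)) = apps N (map (\<lambda>b. R (Var b)) bs @ [R (Var c)])"
        unfolding Rapps RN as by (simp add: comp_def)
      then show ?thesis using Rbs[of bs] by (simp add: lb Rc apps_snoc)
    qed
    have H: "R (apps (Var (hd as)) (map Var (tl as))) =\<^sub>\<beta> Var x"
    proof (cases bs)
      case Nil then show ?thesis using as Rc by (simp add: apps_def beta_eq_def)
    next
      case (Cons b bs')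
      have "R (apps (Var (hd as)) (map Var (tl as))) = App (apps I_comb (replicate (length bs') I_comb)) (Var x)"
      proof -
        have "R (apps (Var (hd as)) (map Var (tl as))) = apps (R (Var b)) (map (\<lambda>b. R (Var b)) bs' @ [R (Var c)])"
          unfolding as Cons Rapps by (simp add: comp_def)
        moreover have "set bs' \<subseteq> set bs" using Cons by auto
        ultimately show ?thesis using Rbs[of bs'] Rbs[of "[b]"] Cons by (simp add: Rc apps_snoc)
      qed
      also have "\<dots> =\<^sub>\<beta> App I_comb (Var x)" by (rule App_eq_L[OF II])
      also have "\<dots> =\<^sub>\<beta> Var x" by (rule IVar)
      finally show ?thesis .
    qed
    have "R (apps N (map Var as)) =\<^sub>\<beta> R (App (apps (Var (hd as)) (map Var (tl as))) (apps N (map Var as)))"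
      using Req[OF assms(5)] .
    then have "App ?M (Var x) =\<^sub>\<beta> App (R (apps (Var (hd as)) (map Var (tl as)))) (App ?M (Var x))"
      using L by (simp add: R_def rep_App F_App)
    also have "\<dots> =\<^sub>\<beta> App (Var x) (App ?M (Var x))" by (rule App_eq_L[OF H])
    finally show "App ?M (Var x) =\<^sub>\<beta> App (Var x) (App ?M (Var x))" .
  qed
qed

end
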